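(* Let $\mathcal{A}=(Q,(Q_n,Q_p),T,P)$ be a strongly connected $d$-dimensional VASS MDP, let $\mathbf{x}$ be a maximal solution of constraint system (I) and $(\mathbf{y},\mathbf{z})$ a maximal solution of constraint system (II). Then for every counter $c\in\{1,\dots,d\}$, either $\mathbf{y}(c)>0$ or $\sum_{t\in T}\mathbf{x}(t)\mathbf{u}_t(c)>0$. Moreover, for every transition $t=(p,\mathbf{u},q)\in T$: if $p\in Q_n$ then either $\mathbf{z}(q)-\mathbf{z}(p)+\sum_{i=1}^d\mathbf{u}(i)\mathbf{y}(i)<0$ or $\mathbf{x}(t)>0$; and if $p\in Q_p$ then either $\sum_{t'=(p,\mathbf{u}',q')\in\mathit{Out}(p)}P(t')\big(\mathbf{z}(q')-\mathbf{z}(p)+\sum_{i=1}^d\mathbf{u}'(i)\mathbf{y}(i)\big)<0$ or $\mathbf{x}(t)>0$.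
   Context: A $d$-dimensional VASS MDP is a tuple $\mathcal{A}=(Q,(Q_n,Q_p),T,P)$: $Q$ finite nonempty set of states partitioned into nondeterministic states $Q_n$ and probabilistic states $Q_p$; $T\subseteq Q\times\mathbb{Z}^d\times Q$ a finite set of transitions such that every $p\in Q$ has a nonempty set $\mathit{Out}(p)$ of outgoing transitions $(p,\mathbf{u},q)$; $P$ assigns to each $t\in\mathit{Out}(p)$ with $p\in Q_p$ a positive rational probability, summing to $1$ over $\mathit{Out}(p)$. $\mathit{In}(p)$ is the set of transitions of the form $(q,\mathbf{u},p)$, and $\mathbf{u}_t$ is the update vector of $t$. $\mathcal{A}$ is strongly connected if its underlying directed graph is strongly connected. Constraint system (I): find $\mathbf{x}\in\mathbb{Z}^T$ with $\sum_{t\in T}\mathbf{x}(t)\mathbf{u}_t\ge\vec{0}$ (componentwise), $\mathbf{x}\ge\vec{0}$, $\sum_{t\in\mathit{Out}(p)}\mathbf{x}(t)=\sum_{t\in\mathit{In}(p)}\mathbf{x}(t)$ for every $p\in Q$, and $\mathbf{x}(t)=P(t)\cdot\sum_{t'\in\mathit{Out}(p)}\mathbf{x}(t')$ for every $p\in Q_p$ and $t\in\mathit{Out}(p)$. Its objective inequalities are $\sum_{t\in T}\mathbf{x}(t)\mathbf{u}_t(c)>0$ for each counter $c$ and $\mathbf{x}(t)>0$ for each $t\in T$. Constraint system (II): find $\mathbf{y}\in\mathbb{Z}^d$, $\mathbf{z}\in\mathbb{Z}^Q$ with $\mathbf{y}\ge\vec 0$, $\mathbf{z}\ge\vec 0$,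 $\mathbf{z}(q)-\mathbf{z}(p)+\sum_{i=1}^d\mathbf{u}(i)\mathbf{y}(i)\le 0$ for every $(p,\mathbf{u},q)\in T$ with $p\in Q_n$, and $\sum_{t=(p,\mathbf{u},q)\in\mathit{Out}(p)}P(t)\big(\mathbf{z}(q)-\mathbf{z}(p)+\sum_{i=1}^d\mathbf{u}_t(i)\mathbf{y}(i)\big)\le 0$ for every $p\in Q_p$. Its objective inequalities are $\mathbf{y}(c)>0$ for each counter $c$, $\mathbf{z}(q)-\mathbf{z}(p)+\sum_i\mathbf{u}(i)\mathbf{y}(i)<0$ for each $(p,\mathbf{u},q)\in T$ with $p\in Q_n$, and the strict version of the probabilistic inequality for each $p\in Q_p$. Solutions of each system are closed under addition; a solution is maximal if every objective inequality that is satisfied (strictly) by some solution of the system is satisfied by it. *)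

theory Defs
  imports Complex_Main
begin

text \<open>A transition is a triple (p, u, q); update vectors in Z^d are represented as
  functions nat => int whose relevant components are 1..d (all others are required to be 0).\<close>

type_synonym 'q trans = "'q \<times> (nat \<Rightarrow> int) \<times> 'q"

definition src :: "'q trans \<Rightarrow> 'q" where "src t = fst t"
definition upd :: "'q trans \<Rightarrow> nat \<Rightarrow> int" where "upd t = fst (snd t)"
definition tgt :: "'q trans \<Rightarrow> 'q" where "tgt t = snd (snd t)"

definition Out :: "'q trans set \<Rightarrow> 'q \<Rightarrow> 'q trans set" where
  "Out T p = {t \<in> T. src t = p}"
definition In :: "'q trans set \<Rightarrow> 'q \<Rightarrow> 'q trans set" where
  "In T p = {t \<in> T. tgt t = p}"

definition vass_mdp ::
  "nat \<Rightarrow> 'q set \<Rightarrow> 'q set \<Rightarrow> 'q set \<Rightarrow> 'q trans set \<Rightarrow> ('q trans \<Rightarrow> rat) \<Rightarrow> bool" where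
  "vass_mdp d Q Qn Qp T P \<longleftrightarrow>
     finite Q \<and> Q \<noteq> {} \<and> Qn \<union> Qp = Q \<and> Qn \<inter> Qp = {} \<and>
     finite T \<and> (\<forall>t\<in>T. src t \<in> Q \<and> tgt t \<in> Q) \<and>
     (\<forall>t\<in>T. \<forall>i. i \<notin> {1..d} \<longrightarrow> upd t i = 0) \<and>
     (\<forall>p\<in>Q. Out T p \<noteq> {}) \<and>
     (\<forall>p\<in>Qp. (\<forall>t\<in>Out T p. P t > 0) \<and> (\<Sum>t\<in>Out T p. P t) = 1)"

definition strongly_connected :: "'q set \<Rightarrow> 'q trans set \<Rightarrow> bool" where
  "strongly_connected Q T \<longleftrightarrow>
     (\<forall>p\<in>Q. \<forall>q\<in>Q. (p, q) \<in> {(src t, tgt t) | t. t \<in> T}\<^sup>*)"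

definition sol_I ::
  "nat \<Rightarrow> 'q set \<Rightarrow> 'q set \<Rightarrow> 'q trans set \<Rightarrow> ('q trans \<Rightarrow> rat) \<Rightarrow> ('q trans \<Rightarrow> int) \<Rightarrow> bool" where
  "sol_I d Q Qp T P x \<longleftrightarrow>
     (\<forall>c\<in>{1..d}. (\<Sum>t\<in>T. x t * upd t c) \<ge> 0) \<and>
     (\<forall>t\<in>T. x t \<ge> 0) \<and>
     (\<forall>p\<in>Q. (\<Sum>t\<in>Out T p. x t) = (\<Sum>t\<in>In T p. x t)) \<and>
     (\<forall>p\<in>Qp. \<forall>t\<in>Out T p. of_int (x t) = P t * of_int (\<Sum>t'\<in>Out T p. x t'))"

definition max_sol_I ::
  "nat \<Rightarrow> 'q set \<Rightarrow> 'q set \<Rightarrow> 'q trans set \<Rightarrow> ('q trans \<Rightarrow> rat) \<Rightarrow> ('q trans \<Rightarrow> int) \<Rightarrow> bool" where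
  "max_sol_I d Q Qp T P x \<longleftrightarrow>
     sol_I d Q Qp T P x \<and>
     (\<forall>c\<in>{1..d}. (\<exists>x'. sol_I d Q Qp T P x' \<and> (\<Sum>t\<in>T. x' t * upd t c) > 0)
                   \<longrightarrow> (\<Sum>t\<in>T. x t * upd t c) > 0) \<and>
     (\<forall>t\<in>T. (\<exists>x'. sol_I d Q Qp T P x' \<and> x' t > 0) \<longrightarrow> x t > 0)"

definition eff :: "nat \<Rightarrow> (nat \<Rightarrow> int) \<Rightarrow> ('q \<Rightarrow> int) \<Rightarrow> 'q trans \<Rightarrow> int" where
  "eff d y z t = z (tgt t) - z (src t) + (\<Sum>i=1..d. upd t i * y i)"

definition prob_eff ::
  "nat \<Rightarrow> 'q trans set \<Rightarrow> ('q trans \<Rightarrow> rat) \<Rightarrow> (nat \<Rightarrow> int) \<Rightarrow> ('q \<Rightarrow> int) \<Rightarrow> 'q \<Rightarrow> rat" where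
  "prob_eff d T P y z p = (\<Sum>t\<in>Out T p. P t * of_int (eff d y z t))"

definition sol_II ::
  "nat \<Rightarrow> 'q set \<Rightarrow> 'q set \<Rightarrow> 'q set \<Rightarrow> 'q trans set \<Rightarrow> ('q trans \<Rightarrow> rat)
   \<Rightarrow> (nat \<Rightarrow> int) \<Rightarrow> ('q \<Rightarrow> int) \<Rightarrow> bool" where
  "sol_II d Q Qn Qp T P y z \<longleftrightarrow>
     (\<forall>c\<in>{1..d}. y c \<ge> 0) \<and> (\<forall>q\<in>Q. z q \<ge> 0) \<and>
     (\<forall>t\<in>T. src t \<in> Qn \<longrightarrow> eff d y z t \<le> 0) \<and>
     (\<forall>p\<in>Qp. prob_eff d T P y z p \<le> 0)"

definition max_sol_II ::
  "nat \<Rightarrow> 'q set \<Rightarrow> 'q set \<Rightarrow> 'q set \<Rightarrow> 'q trans set \<Rightarrow> ('q trans \<Rightarrow> rat)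
   \<Rightarrow> (nat \<Rightarrow> int) \<Rightarrow> ('q \<Rightarrow> int) \<Rightarrow> bool" where
  "max_sol_II d Q Qn Qp T P y z \<longleftrightarrow>
     sol_II d Q Qn Qp T P y z \<and>
     (\<forall>c\<in>{1..d}. (\<exists>y' z'. sol_II d Q Qn Qp T P y' z' \<and> y' c > 0) \<longrightarrow> y c > 0) \<and>
     (\<forall>t\<in>T. src t \<in> Qn \<longrightarrow>
        (\<exists>y' z'. sol_II d Q Qn Qp T P y' z' \<and> eff d y' z' t < 0) \<longrightarrow> eff d y z t < 0) \<and>
     (\<forall>p\<in>Qp. (\<exists>y' z'. sol_II d Q Qn Qp T P y' z' \<and> prob_eff d T P y' z' p < 0)
        \<longrightarrow> prob_eff d T P y z p < 0)"

end

theory Submission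
  imports Defs
begin

definition dotp :: "'v set \<Rightarrow> ('v \<Rightarrow> rat) \<Rightarrow> ('v \<Rightarrow> rat) \<Rightarrow> rat" where
  "dotp V a w = (\<Sum>j\<in>V. a j * w j)"

lemma dotp_lin1: "dotp V (\<lambda>j. r * u j - s * w j) v = r * dotp V u v - s * dotp V w v"
  unfolding dotp_def by (simp add: left_diff_distrib sum_subtractf sum_distrib_left mult.assoc)

lemma dotp_lin2: "dotp V u (\<lambda>j. r * v j - s * w j) = r * dotp V u v - s * dotp V u w"
  unfolding dotp_def by (simp add: right_diff_distrib sum_subtractf sum_distrib_left mult.left_commute)

lemma farkas:
  assumes "finite V" "finite I"
  shows "(\<exists>l. (\<forall>i\<in>I. l i \<ge> 0) \<and> (\<forall>j\<in>V. b j = (\<Sum>i\<in>I. l i * a i j))) \<or>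
         (\<exists>y. (\<forall>i\<in>I. dotp V (a i) y \<le> 0) \<and> dotp V b y > 0)"
  using assms(2)
proof (induction I arbitrary: a b rule: finite_induct)
  case empty
  show ?case
  proof (cases "\<forall>j\<in>V. b j = 0")
    case True then show ?thesis by auto
  next
    case False
    then obtain j0 where j0: "j0 \<in> V" "b j0 \<noteq> 0" by auto
    have "dotp V b b > 0" unfolding dotp_def
      by (rule sum_pos2[OF assms(1) j0(1)]) (use j0 in \<open>auto simp: zero_less_mult_iff\<close>)
    then show ?thesis by auto
  qed
next
  case (insert k I)
  show ?case
  proof (cases "\<exists>l. (\<forall>i\<in>I. l i \<ge> 0) \<and> (\<forall>j\<in>V. b j = (\<Sum>i\<in>I. l i * a i j))")
    case True
    then obtain l where l: "\<forall>i\<in>I. l i \<ge> 0" "\<forall>j\<in>V. b j = (\<Sum>i\<in>I. l i * a i j)" by blast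
    have "\<forall>j\<in>V. b j = (\<Sum>i\<in>insert k I. (l(k:=0)) i * a i j)"
    proof
      fix j assume "j \<in> V"
      have "(\<Sum>i\<in>insert k I. (l(k:=0)) i * a i j) = (\<Sum>i\<in>I. (l(k:=0)) i * a i j)"
        using insert.hyps by simp
      also have "\<dots> = (\<Sum>i\<in>I. l i * a i j)"
        by (rule sum.cong) (use insert.hyps in auto)
      finally show "b j = (\<Sum>i\<in>insert k I. (l(k:=0)) i * a i j)" using l \<open>j \<in> V\<close> by simp
    qed
    moreover have "\<forall>i\<in>insert k I. (l(k:=0)) i \<ge> 0" using l by auto
    ultimately show ?thesis by blast
  next
    case False
    then obtain y where y: "\<forall>i\<in>I. dotp V (a i) y \<le> 0" "dotp V b y > 0"
      using insert.IH[of b a] by blast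
    show ?thesis
    proof (cases "dotp V (a k) y \<le> 0")
      case True
      then show ?thesis using y by auto
    next
      case False
      define \<alpha> where "\<alpha> = dotp V (a k) y"
      have \<alpha>pos: "\<alpha> > 0" using False \<alpha>_def by simp
      define a' where "a' = (\<lambda>i j. \<alpha> * a i j - dotp V (a i) y * a k j)"
      define b' where "b' = (\<lambda>j. \<alpha> * b j - dotp V b y * a k j)"
      from insert.IH[of b' a'] show ?thesis
      proof
        assume "\<exists>l. (\<forall>i\<in>I. l i \<ge> 0) \<and> (\<forall>j\<in>V. b' j = (\<Sum>i\<in>I. l i * a' i j))"
        then obtain l where l: "\<forall>i\<in>I. l i \<ge> 0" "\<forall>j\<in>V. b' j = (\<Sum>i\<in>I. l i * a' i j)" by blast
        define c where "c = (dotp V b y - (\<Sum>i\<in>I. l i * dotp V (a i) y)) / \<alpha>"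
        have "(\<Sum>i\<in>I. l i * dotp V (a i) y) \<le> 0"
          by (rule sum_nonpos) (use l y in \<open>auto intro: mult_nonneg_nonpos\<close>)
        then have c0: "c \<ge> 0" unfolding c_def using \<alpha>pos y by simp
        have "\<forall>j\<in>V. b j = (\<Sum>i\<in>insert k I. (l(k:=c)) i * a i j)"
        proof
          fix j assume jV: "j \<in> V"
          have s1: "(\<Sum>i\<in>I. l i * a' i j) = \<alpha> * (\<Sum>i\<in>I. l i * a i j) - (\<Sum>i\<in>I. l i * dotp V (a i) y) * a k j"
          proof -
            have "(\<Sum>i\<in>I. l i * a' i j) = (\<Sum>i\<in>I. \<alpha> * (l i * a i j) - (l i * dotp V (a i) y) * a k j)"
              unfolding a'_def by (rule sum.cong) (auto simp: algebra_simps)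
            also have "\<dots> = \<alpha> * (\<Sum>i\<in>I. l i * a i j) - (\<Sum>i\<in>I. l i * dotp V (a i) y) * a k j"
              by (simp add: sum_subtractf sum_distrib_left sum_distrib_right)
            finally show ?thesis .
          qed
          have "(\<Sum>i\<in>insert k I. (l(k:=c)) i * a i j) = c * a k j + (\<Sum>i\<in>I. (l(k:=c)) i * a i j)"
            using insert.hyps by simp
          also have "(\<Sum>i\<in>I. (l(k:=c)) i * a i j) = (\<Sum>i\<in>I. l i * a i j)"
            by (rule sum.cong) (use insert.hyps in auto)
          finally have e: "(\<Sum>i\<in>insert k I. (l(k:=c)) i * a i j) = c * a k j + (\<Sum>i\<in>I. l i * a i j)" .
          have "\<alpha> * b j - dotp V b y * a k j = \<alpha> * (\<Sum>i\<in>I. l i * a i j) - (\<Sum>i\<in>I. l i * dotp V (a i) y) * a k j"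
            using l(2) jV s1 unfolding b'_def by simp
          then have eq: "\<alpha> * b j - dotp V b y * a k j = \<alpha> * (\<Sum>i\<in>I. l i * a i j) - (\<Sum>i\<in>I. l i * dotp V (a i) y) * a k j" .
          have c\<alpha>: "c * \<alpha> = dotp V b y - (\<Sum>i\<in>I. l i * dotp V (a i) y)"
            unfolding c_def using \<alpha>pos by simp
          have "\<alpha> * (c * a k j + (\<Sum>i\<in>I. l i * a i j)) = (c * \<alpha>) * a k j + \<alpha> * (\<Sum>i\<in>I. l i * a i j)"
            by (simp add: algebra_simps)
          also have "\<dots> = (dotp V b y - (\<Sum>i\<in>I. l i * dotp V (a i) y)) * a k j + \<alpha> * (\<Sum>i\<in>I. l i * a i j)"
            using c\<alpha> by simp
          also have "\<dots> = \<alpha> * b j" using eq by (simp add: left_diff_distrib)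
          finally have "\<alpha> * b j = \<alpha> * (c * a k j + (\<Sum>i\<in>I. l i * a i j))" by (metis)
          then have "b j = c * a k j + (\<Sum>i\<in>I. l i * a i j)" using \<alpha>pos by simp
          then show "b j = (\<Sum>i\<in>insert k I. (l(k:=c)) i * a i j)" using e by simp
        qed
        moreover have "\<forall>i\<in>insert k I. (l(k:=c)) i \<ge> 0" using l c0 by auto
        ultimately show ?thesis by blast
      next
        assume "\<exists>y'. (\<forall>i\<in>I. dotp V (a' i) y' \<le> 0) \<and> dotp V b' y' > 0"
        then obtain y' where y': "\<forall>i\<in>I. dotp V (a' i) y' \<le> 0" "dotp V b' y' > 0" by blast
        define y'' where "y'' = (\<lambda>j. \<alpha> * y' j - dotp V (a k) y' * y j)"
        have dy: "dotp V w y'' = \<alpha> * dotp V w y' - dotp V (a k) y' * dotp V w y" for w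
          unfolding y''_def by (rule dotp_lin2)
        have da: "dotp V (a' i) y' = \<alpha> * dotp V (a i) y' - dotp V (a i) y * dotp V (a k) y'" for i
          unfolding a'_def by (rule dotp_lin1)
        have db: "dotp V b' y' = \<alpha> * dotp V b y' - dotp V b y * dotp V (a k) y'"
          unfolding b'_def by (rule dotp_lin1)
        have "\<forall>i\<in>insert k I. dotp V (a i) y'' \<le> 0"
        proof
          fix i assume "i \<in> insert k I"
          then show "dotp V (a i) y'' \<le> 0"
          proof
            assume "i = k" then show ?thesis using dy[of "a k"] \<alpha>_def by simp
          next
            assume iI: "i \<in> I"
            have "dotp V (a i) y'' = dotp V (a' i) y'" by (simp add: dy da mult.commute)
            then show ?thesis using y'(1) iI by simp
          qed
        qed
        moreover have "dotp V b y'' > 0" using dy[of b] db y'(2) by (simp add: mult.commute)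
        ultimately show ?thesis by blast
      qed
    qed
  qed
qed


lemma alt:
  assumes "finite V" "finite I" "k \<in> I"
  shows "(\<exists>v. (\<forall>i\<in>I. dotp V (g i) v \<le> 0) \<and> dotp V (g k) v < 0) \<or>
         (\<exists>\<mu>. (\<forall>i\<in>I. \<mu> i \<ge> 0) \<and> \<mu> k > 0 \<and> (\<forall>j\<in>V. (\<Sum>i\<in>I. \<mu> i * g i j) = 0))"
  using farkas[OF assms(1,2), of "\<lambda>j. - g k j" g]
proof
  assume "\<exists>l. (\<forall>i\<in>I. l i \<ge> 0) \<and> (\<forall>j\<in>V. - g k j = (\<Sum>i\<in>I. l i * g i j))"
  then obtain l where l: "\<forall>i\<in>I. l i \<ge> 0" "\<forall>j\<in>V. - g k j = (\<Sum>i\<in>I. l i * g i j)" by blast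
  define \<mu> where "\<mu> = (\<lambda>i. l i + (if i = k then 1 else 0))"
  have "\<forall>j\<in>V. (\<Sum>i\<in>I. \<mu> i * g i j) = 0"
  proof
    fix j assume "j \<in> V"
    have "(\<Sum>i\<in>I. \<mu> i * g i j) = (\<Sum>i\<in>I. l i * g i j) + (\<Sum>i\<in>I. (if i = k then g i j else 0))"
      unfolding \<mu>_def sum.distrib[symmetric] by (rule sum.cong) (auto simp: distrib_right)
    also have "\<dots> = (\<Sum>i\<in>I. l i * g i j) + g k j" using assms(2,3) by simp
    moreover have "- g k j = (\<Sum>i\<in>I. l i * g i j)" using l(2) \<open>j \<in> V\<close> by blast
    ultimately show "(\<Sum>i\<in>I. \<mu> i * g i j) = 0" by linarith
  qed
  moreover have "\<forall>i\<in>I. \<mu> i \<ge> 0" "\<mu> k > 0" using l(1) assms(3) unfolding \<mu>_def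
    by (auto simp: add_nonneg_pos)
  ultimately show ?thesis by blast
next
  assume "\<exists>y. (\<forall>i\<in>I. dotp V (g i) y \<le> 0) \<and> dotp V (\<lambda>j. - g k j) y > 0"
  then obtain y where "\<forall>i\<in>I. dotp V (g i) y \<le> 0" "dotp V (\<lambda>j. - g k j) y > 0" by blast
  moreover have "dotp V (\<lambda>j. - g k j) y = - dotp V (g k) y" unfolding dotp_def by (simp add: sum_negf)
  ultimately show ?thesis by auto
qed

lemma scale_int:
  fixes v :: "'v \<Rightarrow> rat"
  assumes "finite V"
  shows "\<exists>D::int. D > 0 \<and> (\<exists>f::'v \<Rightarrow> int. \<forall>j\<in>V. of_int D * v j = of_int (f j))"
proof -
  have "\<exists>D::int. D > 0 \<and> (\<forall>j\<in>V. \<exists>n::int. of_int D * v j = of_int n)"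
    using assms
  proof (induction V rule: finite_induct)
    case empty then show ?case by (intro exI[of _ 1]) auto
  next
    case (insert j V)
    then obtain D where D: "D > 0" "\<forall>j\<in>V. \<exists>n::int. of_int D * v j = of_int n" by blast
    obtain a b where ab: "quotient_of (v j) = (a, b)" by (cases "quotient_of (v j)") auto
    have b: "b > 0" using quotient_of_denom_pos[OF ab] .
    have vj: "v j = of_int a / of_int b" using quotient_of_div[OF ab] .
    have "\<forall>i\<in>insert j V. \<exists>n::int. of_int (D * b) * v i = of_int n"
    proof
      fix i assume "i \<in> insert j V"
      then show "\<exists>n::int. of_int (D * b) * v i = of_int n"
      proof
        assume "i = j"
        then show ?thesis using b vj by (intro exI[of _ "D * a"]) simp
      next
        assume "i \<in> V"
        then obtain n where "of_int D * v i = of_int n" using D by blast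
        then show ?thesis by (intro exI[of _ "b * n"]) (simp add: algebra_simps)
      qed
    qed
    then show ?case using D b by (intro exI[of _ "D * b"]) auto
  qed
  then show ?thesis by metis
qed


definition ecoef :: "'q trans \<Rightarrow> nat + 'q \<Rightarrow> rat" where
  "ecoef t j = (case j of Inl i \<Rightarrow> of_int (upd t i)
     | Inr q \<Rightarrow> (if q = tgt t then 1 else 0) - (if q = src t then 1 else 0))"

definition pcoef :: "'q trans set \<Rightarrow> ('q trans \<Rightarrow> rat) \<Rightarrow> 'q \<Rightarrow> nat + 'q \<Rightarrow> rat" where
  "pcoef T P p j = (\<Sum>t\<in>Out T p. P t * ecoef t j)"

definition gcoef :: "'q trans set \<Rightarrow> ('q trans \<Rightarrow> rat) \<Rightarrow> nat + ('q trans + 'q) \<Rightarrow> nat + 'q \<Rightarrow> rat" where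
  "gcoef T P k j = (case k of Inl c \<Rightarrow> (if j = Inl c then -1 else 0)
     | Inr (Inl t) \<Rightarrow> ecoef t j | Inr (Inr p) \<Rightarrow> pcoef T P p j)"

lemma sum_plus_set:
  assumes "finite A" "finite B"
  shows "sum f (Inl ` A \<union> Inr ` B) = (\<Sum>a\<in>A. f (Inl a)) + (\<Sum>b\<in>B. f (Inr b))"
proof -
  have "sum f (Inl ` A \<union> Inr ` B) = sum f (Inl ` A) + sum f (Inr ` B)"
    by (rule sum.union_disjoint) (use assms in auto)
  also have "\<dots> = (\<Sum>a\<in>A. f (Inl a)) + (\<Sum>b\<in>B. f (Inr b))"
    by (simp add: sum.reindex)
  finally show ?thesis .
qed

lemma dotp_pcoef: "dotp V (pcoef T P p) v = (\<Sum>t\<in>Out T p. P t * dotp V (ecoef t) v)"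
  unfolding dotp_def pcoef_def
  by (simp add: sum_distrib_right sum_distrib_left mult.assoc sum.swap[of _ V])

context
  fixes d :: nat and Q Qn Qp :: "'q set" and T :: "'q trans set" and P :: "'q trans \<Rightarrow> rat"
  assumes vm: "vass_mdp d Q Qn Qp T P"
begin

definition "Vs = Inl ` {1..d} \<union> Inr ` Q"
definition "Is = Inl ` {1..d} \<union> Inr ` (Inl ` {t\<in>T. src t \<in> Qn} \<union> Inr ` Qp)"

lemma finQ: "finite Q" and finT: "finite T" and QnQp: "Qn \<union> Qp = Q" and disj: "Qn \<inter> Qp = {}"
  and srcQ: "t \<in> T \<Longrightarrow> src t \<in> Q" and tgtQ: "t \<in> T \<Longrightarrow> tgt t \<in> Q"
  and Ppos: "p \<in> Qp \<Longrightarrow> t \<in> Out T p \<Longrightarrow> P t > 0"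
  and Psum: "p \<in> Qp \<Longrightarrow> (\<Sum>t\<in>Out T p. P t) = 1"
  using vm unfolding vass_mdp_def by auto

lemma finQp: "finite Qp" using finQ QnQp by (metis finite_Un)

lemma finVs: "finite Vs" unfolding Vs_def using finQ by simp
lemma finIs: "finite Is" unfolding Is_def using finQ finT finQp by simp

lemma OutT: "Out T p \<subseteq> T" unfolding Out_def by auto

lemma dotp_ecoef:
  assumes "t \<in> T"
  shows "dotp Vs (ecoef t) v = v (Inr (tgt t)) - v (Inr (src t)) + (\<Sum>i=1..d. of_int (upd t i) * v (Inl i))"
proof -
  have "dotp Vs (ecoef t) v = (\<Sum>i=1..d. of_int (upd t i) * v (Inl i))
      + (\<Sum>q\<in>Q. ((if q = tgt t then 1 else 0) - (if q = src t then 1 else 0)) * v (Inr q))"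
    unfolding dotp_def Vs_def by (subst sum_plus_set) (auto simp: finQ ecoef_def)
  also have "(\<Sum>q\<in>Q. ((if q = tgt t then 1 else 0) - (if q = src t then 1 else 0)) * v (Inr q))
      = v (Inr (tgt t)) - v (Inr (src t))"
  proof -
    have "(\<Sum>q\<in>Q. ((if q = tgt t then 1 else 0) - (if q = src t then 1 else 0)) * v (Inr q))
       = (\<Sum>q\<in>Q. (if q = tgt t then v (Inr q) else 0) - (if q = src t then v (Inr q) else 0))"
      by (rule sum.cong) auto
    also have "\<dots> = v (Inr (tgt t)) - v (Inr (src t))"
      using srcQ[OF assms] tgtQ[OF assms] finQ by (simp add: sum_subtractf sum.delta sum.delta')
    finally show ?thesis .
  qed
  finally show ?thesis by simp
qed

lemma dotp_gcoef_c:
  assumes "c \<in> {1..d}"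
  shows "dotp Vs (gcoef T P (Inl c)) v = - v (Inl c)"
proof -
  have "dotp Vs (gcoef T P (Inl c)) v = (\<Sum>j\<in>Vs. if j = Inl c then - v j else 0)"
    unfolding dotp_def gcoef_def by (rule sum.cong) auto
  also have "\<dots> = - v (Inl c)" using assms finVs by (simp add: sum.delta' Vs_def)
  finally show ?thesis .
qed


lemma dual_to_sol:
  assumes v: "\<forall>i\<in>Is. dotp Vs (gcoef T P i) v \<le> 0"
  shows "\<exists>y' z'. sol_II d Q Qn Qp T P y' z' \<and>
     (\<forall>c\<in>{1..d}. dotp Vs (gcoef T P (Inl c)) v < 0 \<longrightarrow> y' c > 0) \<and>
     (\<forall>t\<in>T. src t \<in> Qn \<longrightarrow> dotp Vs (gcoef T P (Inr (Inl t))) v < 0 \<longrightarrow> eff d y' z' t < 0) \<and>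
     (\<forall>p\<in>Qp. dotp Vs (gcoef T P (Inr (Inr p))) v < 0 \<longrightarrow> prob_eff d T P y' z' p < 0)"
proof -
  obtain D :: int and f where D: "D > 0" and f: "\<forall>j\<in>Vs. of_int D * v j = of_int (f j)"
    using scale_int[OF finVs, of v] by blast
  define y' where "y' = (\<lambda>i. f (Inl i))"
  define M where "M = (\<Sum>q\<in>Q. \<bar>f (Inr q)\<bar>)"
  define z' where "z' = (\<lambda>q. f (Inr q) + M)"
  have Dr: "(of_int D :: rat) > 0" using D by simp
  have key: "of_int (eff d y' z' t) = of_int D * dotp Vs (ecoef t) v" if t: "t \<in> T" for t
  proof -
    have fl: "of_int (f (Inl i)) = of_int D * v (Inl i)" if "i \<in> {1..d}" for i
      using f that unfolding Vs_def by auto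
    have fr: "of_int (f (Inr q)) = of_int D * v (Inr q)" if "q \<in> Q" for q
      using f that unfolding Vs_def by auto
    have "(of_int (\<Sum>i=1..d. upd t i * y' i) :: rat) = (\<Sum>i=1..d. of_int (upd t i) * (of_int D * v (Inl i)))"
      unfolding of_int_sum y'_def by (rule sum.cong) (auto simp: fl)
    also have "\<dots> = of_int D * (\<Sum>i=1..d. of_int (upd t i) * v (Inl i))"
      by (simp add: sum_distrib_left mult.left_commute)
    finally have s: "(of_int (\<Sum>i=1..d. upd t i * y' i) :: rat) = of_int D * (\<Sum>i=1..d. of_int (upd t i) * v (Inl i))" .
    show ?thesis unfolding eff_def dotp_ecoef[OF t] z'_def
      using s fr[OF tgtQ[OF t]] fr[OF srcQ[OF t]] by (simp add: algebra_simps)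
  qed
  have keyp: "prob_eff d T P y' z' p = of_int D * dotp Vs (pcoef T P p) v" for p
  proof -
    have "prob_eff d T P y' z' p = (\<Sum>t\<in>Out T p. P t * (of_int D * dotp Vs (ecoef t) v))"
      unfolding prob_eff_def by (rule sum.cong) (simp_all add: key[OF subsetD[OF OutT]])
    then show ?thesis unfolding dotp_pcoef by (simp add: sum_distrib_left mult.left_commute)
  qed
  have sol: "sol_II d Q Qn Qp T P y' z'"
    unfolding sol_II_def
  proof (intro conjI ballI impI)
    fix c assume c: "c \<in> {1..d}"
    have "Inl c \<in> Is" using c unfolding Is_def by auto
    then have "v (Inl c) \<ge> 0" using v dotp_gcoef_c[OF c, of v] by fastforce
    moreover have "of_int (y' c) = of_int D * v (Inl c)" using f c unfolding y'_def Vs_def by auto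
    ultimately have "(of_int (y' c) :: rat) \<ge> 0" using Dr by simp
    then show "y' c \<ge> 0" by simp
  next
    fix q assume q: "q \<in> Q"
    have "\<bar>f (Inr q)\<bar> \<le> M" unfolding M_def by (rule member_le_sum) (use q finQ in auto)
    then show "z' q \<ge> 0" unfolding z'_def by simp
  next
    fix t assume t: "t \<in> T" "src t \<in> Qn"
    then have "Inr (Inl t) \<in> Is" unfolding Is_def by auto
    then have "dotp Vs (ecoef t) v \<le> 0" using v unfolding gcoef_def by fastforce
    then have "(of_int (eff d y' z' t) :: rat) \<le> 0" using key[OF t(1)] Dr by (simp add: mult_nonneg_nonpos)
    then show "eff d y' z' t \<le> 0" by simp
  next
    fix p assume p: "p \<in> Qp"
    then have "Inr (Inr p) \<in> Is" unfolding Is_def by auto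
    then have "dotp Vs (pcoef T P p) v \<le> 0" using v unfolding gcoef_def by fastforce
    then show "prob_eff d T P y' z' p \<le> 0" using keyp Dr by (simp add: mult_nonneg_nonpos)
  qed
  have s1: "\<forall>c\<in>{1..d}. dotp Vs (gcoef T P (Inl c)) v < 0 \<longrightarrow> y' c > 0"
  proof (intro ballI impI)
    fix c assume c: "c \<in> {1..d}" and "dotp Vs (gcoef T P (Inl c)) v < 0"
    then have "v (Inl c) > 0" using dotp_gcoef_c[OF c, of v] by simp
    moreover have "of_int (y' c) = of_int D * v (Inl c)" using f c unfolding y'_def Vs_def by auto
    ultimately have "(of_int (y' c) :: rat) > 0" using Dr by simp
    then show "y' c > 0" by simp
  qed
  have s2: "\<forall>t\<in>T. src t \<in> Qn \<longrightarrow> dotp Vs (gcoef T P (Inr (Inl t))) v < 0 \<longrightarrow> eff d y' z' t < 0"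
  proof (intro ballI impI)
    fix t assume t: "t \<in> T" and "dotp Vs (gcoef T P (Inr (Inl t))) v < 0"
    then have "dotp Vs (ecoef t) v < 0" unfolding gcoef_def by simp
    then have "(of_int (eff d y' z' t) :: rat) < 0" using key[OF t] Dr by (simp add: mult_pos_neg)
    then show "eff d y' z' t < 0" by simp
  qed
  have s3: "\<forall>p\<in>Qp. dotp Vs (gcoef T P (Inr (Inr p))) v < 0 \<longrightarrow> prob_eff d T P y' z' p < 0"
  proof (intro ballI impI)
    fix p assume "dotp Vs (gcoef T P (Inr (Inr p))) v < 0"
    then have "dotp Vs (pcoef T P p) v < 0" unfolding gcoef_def by simp
    then show "prob_eff d T P y' z' p < 0" using keyp Dr by (simp add: mult_pos_neg)
  qed
  show ?thesis using sol s1 s2 s3 by blast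
qed


lemma primal_to_sol:
  assumes mu0: "\<forall>i\<in>Is. \<mu> i \<ge> 0"
    and mueq: "\<forall>j\<in>Vs. (\<Sum>i\<in>Is. \<mu> i * gcoef T P i j) = 0"
  shows "\<exists>x'. sol_I d Q Qp T P x' \<and>
     (\<forall>c\<in>{1..d}. \<mu> (Inl c) > 0 \<longrightarrow> (\<Sum>t\<in>T. x' t * upd t c) > 0) \<and>
     (\<forall>t\<in>T. src t \<in> Qn \<longrightarrow> \<mu> (Inr (Inl t)) > 0 \<longrightarrow> x' t > 0) \<and>
     (\<forall>p\<in>Qp. \<mu> (Inr (Inr p)) > 0 \<longrightarrow> (\<forall>t\<in>Out T p. x' t > 0))"
proof -
  define xr where "xr = (\<lambda>t. if src t \<in> Qn then \<mu> (Inr (Inl t)) else P t * \<mu> (Inr (Inr (src t))))"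
  define Tn where "Tn = {t\<in>T. src t \<in> Qn}"
  define Tp where "Tp = {t\<in>T. src t \<in> Qp}"
  have finTn: "finite Tn" and finTp: "finite Tp" unfolding Tn_def Tp_def using finT by auto
  have TnTp: "T = Tn \<union> Tp" unfolding Tn_def Tp_def using srcQ QnQp by auto
  have TnTpd: "Tn \<inter> Tp = {}" unfolding Tn_def Tp_def using disj by auto
  have OutTp: "Out T p = {t. t \<in> Tp \<and> src t = p}" if "p \<in> Qp" for p
    unfolding Out_def Tp_def using that by auto
  have xrp: "xr t = P t * \<mu> (Inr (Inr p))" if "p \<in> Qp" "t \<in> Out T p" for p t
    using that disj unfolding xr_def Out_def by auto
  have K: "(\<Sum>i\<in>Is. \<mu> i * gcoef T P i j) =
      (\<Sum>c\<in>{1..d}. \<mu> (Inl c) * (if j = Inl c then -1 else 0)) + (\<Sum>t\<in>T. xr t * ecoef t j)" for j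
  proof -
    have "(\<Sum>i\<in>Is. \<mu> i * gcoef T P i j) =
       (\<Sum>c\<in>{1..d}. \<mu> (Inl c) * (if j = Inl c then -1 else 0))
       + ((\<Sum>t\<in>Tn. \<mu> (Inr (Inl t)) * ecoef t j) + (\<Sum>p\<in>Qp. \<mu> (Inr (Inr p)) * pcoef T P p j))"
      unfolding Is_def Tn_def using finT finQp
      by (simp add: sum_plus_set gcoef_def)
    also have "(\<Sum>t\<in>Tn. \<mu> (Inr (Inl t)) * ecoef t j) = (\<Sum>t\<in>Tn. xr t * ecoef t j)"
      by (rule sum.cong) (auto simp: xr_def Tn_def)
    also have "(\<Sum>p\<in>Qp. \<mu> (Inr (Inr p)) * pcoef T P p j)
        = (\<Sum>p\<in>Qp. (\<Sum>t\<in>{t. t \<in> Tp \<and> src t = p}. xr t * ecoef t j))"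
    proof (rule sum.cong)
      fix p assume p: "p \<in> Qp"
      have "\<mu> (Inr (Inr p)) * pcoef T P p j = (\<Sum>t\<in>Out T p. xr t * ecoef t j)"
        unfolding pcoef_def sum_distrib_left
        by (rule sum.cong) (simp_all add: xrp[OF p])
      then show "\<mu> (Inr (Inr p)) * pcoef T P p j = (\<Sum>t\<in>{t. t \<in> Tp \<and> src t = p}. xr t * ecoef t j)"
        using OutTp[OF p] by simp
    qed simp
    also have "\<dots> = (\<Sum>t\<in>Tp. xr t * ecoef t j)"
      by (rule sum.group) (use finTp finQp in \<open>auto simp: Tp_def\<close>)
    also have "(\<Sum>t\<in>Tn. xr t * ecoef t j) + (\<Sum>t\<in>Tp. xr t * ecoef t j) = (\<Sum>t\<in>T. xr t * ecoef t j)"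
      unfolding TnTp by (rule sum.union_disjoint[symmetric]) (use finTn finTp TnTpd in auto)
    finally show ?thesis .
  qed
  have F1: "(\<Sum>t\<in>T. xr t * of_int (upd t c)) = \<mu> (Inl c)" if c: "c \<in> {1..d}" for c
  proof -
    have "Inl c \<in> Vs" using c unfolding Vs_def by auto
    then have "(\<Sum>c'\<in>{1..d}. \<mu> (Inl c') * (if Inl c = (Inl c' :: nat + 'q) then -1 else 0)) + (\<Sum>t\<in>T. xr t * ecoef t (Inl c)) = 0"
      using mueq K by metis
    moreover have "(\<Sum>c'\<in>{1..d}. \<mu> (Inl c') * (if Inl c = (Inl c' :: nat + 'q) then -1 else 0)) = - \<mu> (Inl c)"
    proof -
      have "(\<Sum>c'\<in>{1..d}. \<mu> (Inl c') * (if Inl c = (Inl c' :: nat + 'q) then -1 else 0)) = (\<Sum>c'\<in>{1..d}. if c = c' then - \<mu> (Inl c') else 0)"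
        by (rule sum.cong) auto
      also have "\<dots> = - \<mu> (Inl c)" using c by (simp add: sum.delta)
      finally show ?thesis .
    qed
    ultimately show ?thesis by (simp add: ecoef_def)
  qed
  have F2: "(\<Sum>t\<in>Out T q. xr t) = (\<Sum>t\<in>In T q. xr t)" if q: "q \<in> Q" for q
  proof -
    have "Inr q \<in> Vs" using q unfolding Vs_def by auto
    then have "(\<Sum>c'\<in>{1..d}. \<mu> (Inl c') * (if (Inr q :: nat + 'q) = Inl c' then -1 else 0)) + (\<Sum>t\<in>T. xr t * ecoef t (Inr q)) = 0"
      using mueq K by metis
    then have e: "(\<Sum>t\<in>T. xr t * ecoef t (Inr q)) = 0" by simp
    have "(\<Sum>t\<in>T. xr t * ecoef t (Inr q)) = (\<Sum>t\<in>T. (if tgt t = q then xr t else 0) - (if src t = q then xr t else 0))"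
      by (rule sum.cong) (auto simp: ecoef_def)
    also have "\<dots> = (\<Sum>t\<in>In T q. xr t) - (\<Sum>t\<in>Out T q. xr t)"
      unfolding In_def Out_def using finT by (simp add: sum_subtractf sum.inter_filter)
    finally show ?thesis using e by simp
  qed
  have F3: "xr t = P t * (\<Sum>t'\<in>Out T p. xr t')" if p: "p \<in> Qp" and t: "t \<in> Out T p" for p t
  proof -
    have "(\<Sum>t'\<in>Out T p. xr t') = (\<Sum>t'\<in>Out T p. P t' * \<mu> (Inr (Inr p)))"
      by (rule sum.cong) (simp_all add: xrp[OF p])
    also have "\<dots> = \<mu> (Inr (Inr p))" using Psum[OF p] by (simp add: sum_distrib_right[symmetric])
    finally show ?thesis using xrp[OF p t] by simp
  qed
  have F4: "xr t \<ge> 0" if t: "t \<in> T" for t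
  proof (cases "src t \<in> Qn")
    case True
    then have "Inr (Inl t) \<in> Is" using t unfolding Is_def by auto
    then show ?thesis using mu0 True unfolding xr_def by auto
  next
    case False
    then have p: "src t \<in> Qp" using srcQ[OF t] QnQp by auto
    then have "Inr (Inr (src t)) \<in> Is" unfolding Is_def by auto
    moreover have "t \<in> Out T (src t)" using t unfolding Out_def by auto
    ultimately have "P t > 0" "\<mu> (Inr (Inr (src t))) \<ge> 0" using mu0 Ppos[OF p] by auto
    then show ?thesis using False unfolding xr_def by simp
  qed
  obtain D :: int and f where D: "D > 0" and f: "\<forall>t\<in>T. of_int D * xr t = of_int (f t)"
    using scale_int[OF finT, of xr] by blast
  have Dr: "(of_int D :: rat) > 0" using D by simp
  have fsum: "(of_int (\<Sum>t\<in>S. f t) :: rat) = of_int D * (\<Sum>t\<in>S. xr t)" if "S \<subseteq> T" for S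
    unfolding of_int_sum sum_distrib_left by (rule sum.cong) (use f that in auto)
  have fc: "(of_int (\<Sum>t\<in>T. f t * upd t c) :: rat) = of_int D * \<mu> (Inl c)" if c: "c \<in> {1..d}" for c
  proof -
    have "(of_int (\<Sum>t\<in>T. f t * upd t c) :: rat) = (\<Sum>t\<in>T. of_int D * (xr t * of_int (upd t c)))"
      unfolding of_int_sum by (rule sum.cong) (use f in \<open>auto simp: mult.assoc[symmetric]\<close>)
    then show ?thesis using F1[OF c] by (simp add: sum_distrib_left[symmetric])
  qed
  have sol: "sol_I d Q Qp T P f"
    unfolding sol_I_def
  proof (intro conjI ballI)
    fix c assume c: "c \<in> {1..d}"
    have "\<mu> (Inl c) \<ge> 0" using mu0 c unfolding Is_def by auto
    then have "(of_int (\<Sum>t\<in>T. f t * upd t c) :: rat) \<ge> 0" using fc[OF c] Dr by simp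
    then show "(\<Sum>t\<in>T. f t * upd t c) \<ge> 0" by (metis of_int_0_le_iff)
  next
    fix t assume t: "t \<in> T"
    then have "(of_int (f t) :: rat) \<ge> 0" using f F4[OF t] Dr by (metis mult_nonneg_nonneg less_imp_le)
    then show "f t \<ge> 0" by simp
  next
    fix q assume q: "q \<in> Q"
    have "(of_int (\<Sum>t\<in>Out T q. f t) :: rat) = of_int (\<Sum>t\<in>In T q. f t)"
      using fsum[of "Out T q"] fsum[of "In T q"] F2[OF q] by (simp add: Out_def In_def)
    then show "(\<Sum>t\<in>Out T q. f t) = (\<Sum>t\<in>In T q. f t)" by (metis of_int_eq_iff)
  next
    fix p t assume p: "p \<in> Qp" and t: "t \<in> Out T p"
    have tT: "t \<in> T" using t OutT by auto
    have "(of_int (f t) :: rat) = of_int D * xr t" using f tT by simp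
    also have "\<dots> = P t * (of_int D * (\<Sum>t'\<in>Out T p. xr t'))" using F3[OF p t] by simp
    also have "\<dots> = P t * of_int (\<Sum>t'\<in>Out T p. f t')" using fsum[OF OutT] by simp
    finally show "of_int (f t) = P t * of_int (\<Sum>t'\<in>Out T p. f t')" .
  qed
  have s1: "\<forall>c\<in>{1..d}. \<mu> (Inl c) > 0 \<longrightarrow> (\<Sum>t\<in>T. f t * upd t c) > 0"
  proof (intro ballI impI)
    fix c assume c: "c \<in> {1..d}" and "\<mu> (Inl c) > 0"
    then have "(of_int (\<Sum>t\<in>T. f t * upd t c) :: rat) > 0" using fc[OF c] Dr by simp
    then show "(\<Sum>t\<in>T. f t * upd t c) > 0" by (metis of_int_0_less_iff)
  qed
  have pos: "f t > 0" if "t \<in> T" "xr t > 0" for t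
  proof -
    have "(of_int (f t) :: rat) > 0" using f that Dr by (metis mult_pos_pos)
    then show ?thesis by simp
  qed
  have s2: "\<forall>t\<in>T. src t \<in> Qn \<longrightarrow> \<mu> (Inr (Inl t)) > 0 \<longrightarrow> f t > 0"
    using pos unfolding xr_def by auto
  have s3: "\<forall>p\<in>Qp. \<mu> (Inr (Inr p)) > 0 \<longrightarrow> (\<forall>t\<in>Out T p. f t > 0)"
  proof (intro ballI impI)
    fix p t assume p: "p \<in> Qp" and m: "\<mu> (Inr (Inr p)) > 0" and t: "t \<in> Out T p"
    have "xr t > 0" using xrp[OF p t] Ppos[OF p t] m by simp
    then show "f t > 0" using pos t OutT by blast
  qed
  show ?thesis using sol s1 s2 s3 by blast
qed


lemma altk:
  assumes "k \<in> Is"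
  shows "(\<exists>v. (\<forall>i\<in>Is. dotp Vs (gcoef T P i) v \<le> 0) \<and> dotp Vs (gcoef T P k) v < 0) \<or>
         (\<exists>\<mu>. (\<forall>i\<in>Is. \<mu> i \<ge> 0) \<and> \<mu> k > 0 \<and> (\<forall>j\<in>Vs. (\<Sum>i\<in>Is. \<mu> i * gcoef T P i j) = 0))"
  by (rule alt[OF finVs finIs assms])

lemma main:
  assumes mx: "max_sol_I d Q Qp T P x" and my: "max_sol_II d Q Qn Qp T P y z"
  shows "(\<forall>c\<in>{1..d}. y c > 0 \<or> (\<Sum>t\<in>T. x t * upd t c) > 0) \<and>
         (\<forall>t\<in>T. (src t \<in> Qn \<longrightarrow> eff d y z t < 0 \<or> x t > 0) \<and>
                 (src t \<in> Qp \<longrightarrow> prob_eff d T P y z (src t) < 0 \<or> x t > 0))"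
proof (intro conjI ballI impI)
  fix c assume c: "c \<in> {1..d}"
  have "Inl c \<in> Is" using c unfolding Is_def by auto
  from altk[OF this] show "y c > 0 \<or> (\<Sum>t\<in>T. x t * upd t c) > 0"
  proof
    assume "\<exists>v. (\<forall>i\<in>Is. dotp Vs (gcoef T P i) v \<le> 0) \<and> dotp Vs (gcoef T P (Inl c)) v < 0"
    then obtain v where v: "\<forall>i\<in>Is. dotp Vs (gcoef T P i) v \<le> 0" "dotp Vs (gcoef T P (Inl c)) v < 0" by blast
    from dual_to_sol[OF v(1)] obtain y' z' where "sol_II d Q Qn Qp T P y' z'" "y' c > 0"
      using v(2) c by blast
    then have "y c > 0" using my c unfolding max_sol_II_def by blast
    then show ?thesis by simp
  next
    assume "\<exists>\<mu>. (\<forall>i\<in>Is. \<mu> i \<ge> 0) \<and> \<mu> (Inl c) > 0 \<and> (\<forall>j\<in>Vs. (\<Sum>i\<in>Is. \<mu> i * gcoef T P i j) = 0)"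
    then obtain \<mu> where m: "\<forall>i\<in>Is. \<mu> i \<ge> 0" "\<mu> (Inl c) > 0" "\<forall>j\<in>Vs. (\<Sum>i\<in>Is. \<mu> i * gcoef T P i j) = 0" by blast
    from primal_to_sol[OF m(1) m(3)] obtain x' where "sol_I d Q Qp T P x'" "(\<Sum>t\<in>T. x' t * upd t c) > 0"
      using m(2) c by blast
    then have "(\<Sum>t\<in>T. x t * upd t c) > 0" using mx c unfolding max_sol_I_def by blast
    then show ?thesis by simp
  qed
next
  fix t assume t: "t \<in> T" and s: "src t \<in> Qn"
  have "Inr (Inl t) \<in> Is" using t s unfolding Is_def by auto
  from altk[OF this] show "eff d y z t < 0 \<or> x t > 0"
  proof
    assume "\<exists>v. (\<forall>i\<in>Is. dotp Vs (gcoef T P i) v \<le> 0) \<and> dotp Vs (gcoef T P (Inr (Inl t))) v < 0"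
    then obtain v where v: "\<forall>i\<in>Is. dotp Vs (gcoef T P i) v \<le> 0" "dotp Vs (gcoef T P (Inr (Inl t))) v < 0" by blast
    from dual_to_sol[OF v(1)] obtain y' z' where "sol_II d Q Qn Qp T P y' z'" "eff d y' z' t < 0"
      using v(2) t s by blast
    then have "eff d y z t < 0" using my t s unfolding max_sol_II_def by blast
    then show ?thesis by simp
  next
    assume "\<exists>\<mu>. (\<forall>i\<in>Is. \<mu> i \<ge> 0) \<and> \<mu> (Inr (Inl t)) > 0 \<and> (\<forall>j\<in>Vs. (\<Sum>i\<in>Is. \<mu> i * gcoef T P i j) = 0)"
    then obtain \<mu> where m: "\<forall>i\<in>Is. \<mu> i \<ge> 0" "\<mu> (Inr (Inl t)) > 0" "\<forall>j\<in>Vs. (\<Sum>i\<in>Is. \<mu> i * gcoef T P i j) = 0" by blast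
    from primal_to_sol[OF m(1) m(3)] obtain x' where "sol_I d Q Qp T P x'" "x' t > 0"
      using m(2) t s by blast
    then have "x t > 0" using mx t unfolding max_sol_I_def by blast
    then show ?thesis by simp
  qed
next
  fix t assume t: "t \<in> T" and s: "src t \<in> Qp"
  have tO: "t \<in> Out T (src t)" using t unfolding Out_def by auto
  have "Inr (Inr (src t)) \<in> Is" using s unfolding Is_def by auto
  from altk[OF this] show "prob_eff d T P y z (src t) < 0 \<or> x t > 0"
  proof
    assume "\<exists>v. (\<forall>i\<in>Is. dotp Vs (gcoef T P i) v \<le> 0) \<and> dotp Vs (gcoef T P (Inr (Inr (src t)))) v < 0"
    then obtain v where v: "\<forall>i\<in>Is. dotp Vs (gcoef T P i) v \<le> 0" "dotp Vs (gcoef T P (Inr (Inr (src t)))) v < 0" by blast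
    from dual_to_sol[OF v(1)] obtain y' z' where "sol_II d Q Qn Qp T P y' z'" "prob_eff d T P y' z' (src t) < 0"
      using v(2) s by blast
    then have "prob_eff d T P y z (src t) < 0" using my s unfolding max_sol_II_def by blast
    then show ?thesis by simp
  next
    assume "\<exists>\<mu>. (\<forall>i\<in>Is. \<mu> i \<ge> 0) \<and> \<mu> (Inr (Inr (src t))) > 0 \<and> (\<forall>j\<in>Vs. (\<Sum>i\<in>Is. \<mu> i * gcoef T P i j) = 0)"
    then obtain \<mu> where m: "\<forall>i\<in>Is. \<mu> i \<ge> 0" "\<mu> (Inr (Inr (src t))) > 0" "\<forall>j\<in>Vs. (\<Sum>i\<in>Is. \<mu> i * gcoef T P i j) = 0" by blast
    from primal_to_sol[OF m(1) m(3)] obtain x' where "sol_I d Q Qp T P x'" "x' t > 0"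
      using m(2) s tO by blast
    then have "x t > 0" using mx t unfolding max_sol_I_def by blast
    then show ?thesis by simp
  qed
qed

end

theorem lemma4p2:
  fixes d :: nat and Q Qn Qp :: "'q set" and T :: "'q trans set" and P :: "'q trans \<Rightarrow> rat"
    and x :: "'q trans \<Rightarrow> int" and y :: "nat \<Rightarrow> int" and z :: "'q \<Rightarrow> int"
  assumes "vass_mdp d Q Qn Qp T P"
    and "strongly_connected Q T"
    and "max_sol_I d Q Qp T P x"
    and "max_sol_II d Q Qn Qp T P y z"
  shows "(\<forall>c\<in>{1..d}. y c > 0 \<or> (\<Sum>t\<in>T. x t * upd t c) > 0) \<and>
         (\<forall>t\<in>T. (src t \<in> Qn \<longrightarrow> eff d y z t < 0 \<or> x t > 0) \<and>
                 (src t \<in> Qp \<longrightarrow> prob_eff d T P y z (src t) < 0 \<or> x t > 0))"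
  by (rule main[OF assms(1) assms(3) assms(4)])

end
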